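(* Let $\alpha\in\mathbb{N}_0$. (i) For every $y\in C^{(2\alpha+4)}(0,\infty)$ and $x>0$, $$(-1)^{\alpha+1}\prod_{j=0}^{\alpha+1}\Big\{L_{2,x}^{2j-1}-\frac{2j}{x}-j\Big\}y(x)=(-1)^{\alpha+1}L_{2,x}^{-1}\prod_{j=1}^{\alpha+1}\big\{L_{2,x}^{\alpha+1}-j\big\}y(x).$$ (ii) Denoting by $\mathcal{L}$ the operator on the right-hand side of (i), for every $n\in\mathbb{N}$ one has $\big[\mathcal{L}+(n)_{\alpha+2}\big]T_n^{\alpha}(x)=0$.
   Context: For real $\gamma$ (including $-1$), $L_{2,x}^{\gamma}=xD_x^2+(\gamma+1-x)D_x$, so $L_{2,x}^{-1}=x[D_x^2-D_x]$. The product $\prod_{j=a}^{b}\{A_j\}$ means $A_b\cdots A_a$, factors applied successively to the function on the right in increasing order of $j$. $(a)_k$ is the Pochhammer symbol. $L_n^{\gamma}(x)=\frac{(\gamma+1)_n}{n!}{}_1F_1(-n;\gamma+1;x)$ are the Laguerre polynomials, and for $n\ge1$, $T_n^{\alpha}(x)=-t_n^{\alpha}\,x\,L_{n-1}^{\alpha+2}(x)$ with $t_n^{\alpha}=(\alpha+2)_{n-1}/n!$. *)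

theory Defs
  imports "HOL-Analysis.Analysis"
begin

definition Ck_on :: "nat \<Rightarrow> real set \<Rightarrow> (real \<Rightarrow> real) \<Rightarrow> bool" where
  "Ck_on k S f \<longleftrightarrow>
     (\<forall>m<k. \<forall>x\<in>S. ((deriv ^^ m) f has_real_derivative (deriv ^^ Suc m) f x) (at x))
     \<and> continuous_on S ((deriv ^^ k) f)"

definition Lag_op :: "real \<Rightarrow> (real \<Rightarrow> real) \<Rightarrow> (real \<Rightarrow> real)" where
  "Lag_op \<gamma> f = (\<lambda>x. x * deriv (deriv f) x + (\<gamma> + 1 - x) * deriv f x)"

text \<open>Ordered operator product prod_{j=a}^{b} A_j = A_b ... A_a (A_a applied first).\<close>
definition op_prod :: "(nat \<Rightarrow> (real \<Rightarrow> real) \<Rightarrow> (real \<Rightarrow> real)) \<Rightarrow> nat \<Rightarrow> nat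
    \<Rightarrow> (real \<Rightarrow> real) \<Rightarrow> (real \<Rightarrow> real)" where
  "op_prod A a b f = fold A [a..<Suc b] f"

definition hyp1F1_term :: "nat \<Rightarrow> real \<Rightarrow> real \<Rightarrow> real" where
  "hyp1F1_term n c x = (\<Sum>k\<le>n. pochhammer (- real n) k / (pochhammer c k * fact k) * x ^ k)"

definition laguerre :: "nat \<Rightarrow> real \<Rightarrow> real \<Rightarrow> real" where
  "laguerre n \<gamma> x = pochhammer (\<gamma> + 1) n / fact n * hyp1F1_term n (\<gamma> + 1) x"

definition t_coef :: "nat \<Rightarrow> nat \<Rightarrow> real" where
  "t_coef \<alpha> n = pochhammer (real \<alpha> + 2) (n - 1) / fact n"

definition T_fun :: "nat \<Rightarrow> nat \<Rightarrow> real \<Rightarrow> real" where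
  "T_fun \<alpha> n x = - t_coef \<alpha> n * x * laguerre (n - 1) (real \<alpha> + 2) x"

definition lhs_factor :: "nat \<Rightarrow> (real \<Rightarrow> real) \<Rightarrow> (real \<Rightarrow> real)" where
  "lhs_factor j f = (\<lambda>x. Lag_op (2 * real j - 1) f x - (2 * real j / x) * f x - real j * f x)"

definition rhs_factor :: "nat \<Rightarrow> nat \<Rightarrow> (real \<Rightarrow> real) \<Rightarrow> (real \<Rightarrow> real)" where
  "rhs_factor \<alpha> j f = (\<lambda>x. Lag_op (real \<alpha> + 1) f x - real j * f x)"

definition calL :: "nat \<Rightarrow> (real \<Rightarrow> real) \<Rightarrow> (real \<Rightarrow> real)" where
  "calL \<alpha> f = (\<lambda>x. (-1) ^ (\<alpha> + 1) * Lag_op (-1) (op_prod (rhs_factor \<alpha>) 1 (\<alpha> + 1) f) x)"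

end

theory Submission imports Defs "HOL-Computational_Algebra.Polynomial" begin

lemma Ck_Suc:
  "Ck_on (Suc k) S f \<longleftrightarrow> (\<forall>x\<in>S. (f has_real_derivative deriv f x) (at x)) \<and> Ck_on k S (deriv f)"
  unfolding Ck_on_def
  apply (auto simp: funpow_Suc_right simp del: funpow.simps)
  subgoal for m x by (cases m) (auto simp: funpow_Suc_right simp del: funpow.simps)
  done

lemma Ck_cong:
  assumes "open S" "\<And>x. x \<in> S \<Longrightarrow> f x = g x" "Ck_on k S f"
  shows "Ck_on k S g"
proof -
  have e: "(deriv ^^ m) f x = (deriv ^^ m) g x" if "x \<in> S" for m x
  proof (rule higher_deriv_cong_ev[OF _ refl])
    show "\<forall>\<^sub>F x in nhds x. f x = g x"
      using eventually_nhds_in_open[OF assms(1) that] by (rule eventually_mono) (use assms(2) in auto)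
  qed
  show ?thesis using assms(3) unfolding Ck_on_def
  proof (intro conjI ballI allI impI)
    fix m x assume A: "(\<forall>m<k. \<forall>x\<in>S. ((deriv ^^ m) f has_real_derivative (deriv ^^ Suc m) f x) (at x)) \<and>
    continuous_on S ((deriv ^^ k) f)" and m: "m < k" and x: "x \<in> S"
    have "((deriv ^^ m) f has_real_derivative (deriv ^^ Suc m) f x) (at x)" using A m x by auto
    then have "((deriv ^^ m) g has_real_derivative (deriv ^^ Suc m) f x) (at x)"
      by (rule has_field_derivative_transform_within_open[OF _ assms(1) x]) (rule e)
    then show "((deriv ^^ m) g has_real_derivative (deriv ^^ Suc m) g x) (at x)"
      using e[OF x, of "Suc m"] by simp
  next
    assume A: "(\<forall>m<k. \<forall>x\<in>S. ((deriv ^^ m) f has_real_derivative (deriv ^^ Suc m) f x) (at x)) \<and>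
    continuous_on S ((deriv ^^ k) f)"
    then show "continuous_on S ((deriv ^^ k) g)" using continuous_on_cong[OF refl, of S "(deriv ^^ k) f" "(deriv ^^ k) g"] e by auto
  qed
qed

lemma Ck_0: "Ck_on 0 S f \<longleftrightarrow> continuous_on S f"
  unfolding Ck_on_def by simp

lemma Ck_mono: "Ck_on (Suc k) S f \<Longrightarrow> Ck_on k S f"
proof (induction k arbitrary: f)
  case 0
  then have "\<forall>x\<in>S. (f has_real_derivative deriv f x) (at x)" by (simp add: Ck_Suc)
  then show ?case unfolding Ck_0
    by (meson DERIV_isCont continuous_at_imp_continuous_on)
next
  case (Suc k)
  then show ?case by (metis Ck_Suc)
qed

lemma Ck_mono_le: "Ck_on n S f \<Longrightarrow> k \<le> n \<Longrightarrow> Ck_on k S f"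
  by (induction n) (auto simp: le_Suc_eq intro: Ck_mono)

lemma Ck_const: "Ck_on k S (\<lambda>x. c)"
proof (induction k arbitrary: c)
  case 0 then show ?case by (simp add: Ck_0)
next
  case (Suc k)
  have "deriv (\<lambda>x. c) = (\<lambda>x. 0)" by (rule ext, rule DERIV_imp_deriv) simp
  then show ?case using Suc by (simp add: Ck_Suc)
qed

lemma Ck_id: "Ck_on k S (\<lambda>x. x)"
proof (cases k)
  case 0 then show ?thesis by (simp add: Ck_0 continuous_on_id)
next
  case (Suc k)
  have "deriv (\<lambda>x. x) = (\<lambda>x. 1)" by (rule ext, rule DERIV_imp_deriv) simp
  then show ?thesis using Suc by (simp add: Ck_Suc Ck_const)
qed

lemma Ck_add: "open S \<Longrightarrow> Ck_on k S f \<Longrightarrow> Ck_on k S g \<Longrightarrow> Ck_on k S (\<lambda>x. f x + g x)"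
proof (induction k arbitrary: f g)
  case 0 then show ?case by (simp add: Ck_0 continuous_on_add)
next
  case (Suc k)
  from Suc.prems have df: "\<forall>x\<in>S. (f has_real_derivative deriv f x) (at x)" and dg: "\<forall>x\<in>S. (g has_real_derivative deriv g x) (at x)"
    and cf: "Ck_on k S (deriv f)" and cg: "Ck_on k S (deriv g)" by (auto simp: Ck_Suc)
  have d: "((\<lambda>x. f x + g x) has_real_derivative deriv f x + deriv g x) (at x)" if "x \<in> S" for x
    using df dg that by (auto intro!: derivative_eq_intros)
  have h: "Ck_on k S (\<lambda>x. deriv f x + deriv g x)" by (rule Suc.IH[OF Suc.prems(1) cf cg])
  have "Ck_on k S (deriv (\<lambda>x. f x + g x))"
    by (rule Ck_cong[OF Suc.prems(1) _ h]) (metis d DERIV_imp_deriv)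
  moreover have "\<forall>x\<in>S. ((\<lambda>x. f x + g x) has_real_derivative deriv (\<lambda>x. f x + g x) x) (at x)"
    using d DERIV_imp_deriv by (metis (no_types, lifting))
  ultimately show ?case by (simp add: Ck_Suc)
qed

lemma Ck_mult: "open S \<Longrightarrow> Ck_on k S f \<Longrightarrow> Ck_on k S g \<Longrightarrow> Ck_on k S (\<lambda>x. f x * g x)"
proof (induction k arbitrary: f g)
  case 0 then show ?case by (simp add: Ck_0 continuous_on_mult)
next
  case (Suc k)
  from Suc.prems have df: "\<forall>x\<in>S. (f has_real_derivative deriv f x) (at x)" and dg: "\<forall>x\<in>S. (g has_real_derivative deriv g x) (at x)"
    and cf: "Ck_on k S (deriv f)" and cg: "Ck_on k S (deriv g)" by (auto simp: Ck_Suc)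
  have f: "Ck_on k S f" and g: "Ck_on k S g" using Suc.prems Ck_mono by blast+
  have d: "((\<lambda>x. f x * g x) has_real_derivative deriv f x * g x + f x * deriv g x) (at x)" if "x \<in> S" for x
    using df dg that by (auto intro!: derivative_eq_intros)
  have h: "Ck_on k S (\<lambda>x. deriv f x * g x + f x * deriv g x)"
    by (rule Ck_add[OF Suc.prems(1)]; rule Suc.IH[OF Suc.prems(1)]) (use cf cg f g in auto)
  have "Ck_on k S (deriv (\<lambda>x. f x * g x))"
    by (rule Ck_cong[OF Suc.prems(1) _ h]) (metis d DERIV_imp_deriv)
  moreover have "\<forall>x\<in>S. ((\<lambda>x. f x * g x) has_real_derivative deriv (\<lambda>x. f x * g x) x) (at x)"
    using d DERIV_imp_deriv by (metis (no_types, lifting))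
  ultimately show ?case by (simp add: Ck_Suc)
qed

lemma Ck_diff: "open S \<Longrightarrow> Ck_on k S f \<Longrightarrow> Ck_on k S g \<Longrightarrow> Ck_on k S (\<lambda>x. f x - g x)"
proof -
  assume *: "open S" "Ck_on k S f" "Ck_on k S g"
  have "Ck_on k S (\<lambda>x. f x + (-1) * g x)"
    by (intro Ck_add Ck_mult Ck_const *)
  then show ?thesis by simp
qed

lemma Ck_deriv: "Ck_on (Suc k) S f \<Longrightarrow> Ck_on k S (deriv f)"
  by (simp add: Ck_Suc)

lemma Ck_Lag: "open S \<Longrightarrow> Ck_on (k+2) S f \<Longrightarrow> Ck_on k S (Lag_op \<gamma> f)"
  unfolding Lag_op_def
  by (intro Ck_add Ck_mult Ck_diff Ck_id Ck_const Ck_deriv)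
     (auto intro: Ck_mono_le[of "k+2" S f] Ck_mono Ck_deriv simp: numeral_2_eq_2)

definition Rf :: "real \<Rightarrow> nat \<Rightarrow> (real \<Rightarrow> real) \<Rightarrow> (real \<Rightarrow> real)" where
  "Rf \<beta> j f = (\<lambda>x. Lag_op \<beta> f x - real j * f x)"

lemma Lag_Rf0: "Lag_op \<gamma> f = Rf \<gamma> 0 f"
  by (simp add: Rf_def)

lemma Ck_Rf: "open S \<Longrightarrow> Ck_on (k+2) S f \<Longrightarrow> Ck_on k S (Rf \<beta> j f)"
  unfolding Rf_def
  by (intro Ck_diff Ck_mult Ck_const Ck_Lag) (auto intro: Ck_mono_le)

lemma Ck_fold: "open S \<Longrightarrow> Ck_on (k + 2 * length js) S f \<Longrightarrow> Ck_on k S (fold (Rf \<beta>) js f)"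
proof (induction js arbitrary: f)
  case Nil then show ?case by simp
next
  case (Cons j js)
  have "Ck_on (k + 2 * length js) S (Rf \<beta> j f)"
    by (rule Ck_Rf[OF Cons.prems(1)]) (use Cons.prems(2) in \<open>simp add: algebra_simps\<close>)
  then show ?case using Cons.IH[OF Cons.prems(1)] by simp
qed

lemma ev_open: "open S \<Longrightarrow> x \<in> S \<Longrightarrow> (\<And>z. z \<in> S \<Longrightarrow> f z = g z) \<Longrightarrow> \<forall>\<^sub>F z in nhds x. f z = g z"
  using eventually_nhds_in_open by (rule eventually_mono) auto

lemma hd_cong: "open S \<Longrightarrow> x \<in> S \<Longrightarrow> (\<And>z. z \<in> S \<Longrightarrow> f z = g z) \<Longrightarrow> (deriv ^^ n) f x = (deriv ^^ n) g x"
  by (rule higher_deriv_cong_ev[OF ev_open refl])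

lemma Lag_loc: "open S \<Longrightarrow> x \<in> S \<Longrightarrow> (\<And>z. z \<in> S \<Longrightarrow> f z = g z) \<Longrightarrow> Lag_op \<gamma> f x = Lag_op \<gamma> g x"
  using hd_cong[of S x f g 1] hd_cong[of S x f g 2]
  by (simp add: Lag_op_def numeral_2_eq_2)

lemma Rf_loc: "open S \<Longrightarrow> x \<in> S \<Longrightarrow> (\<And>z. z \<in> S \<Longrightarrow> f z = g z) \<Longrightarrow> Rf \<gamma> j f x = Rf \<gamma> j g x"
  using Lag_loc[of S x f g] by (simp add: Rf_def)

lemma Ck_der: "Ck_on k S f \<Longrightarrow> m < k \<Longrightarrow> x \<in> S \<Longrightarrow> ((deriv ^^ m) f has_real_derivative (deriv ^^ Suc m) f x) (at x)"
  unfolding Ck_on_def by blast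

lemma DL:
  assumes "open S" "Ck_on (m+2) S f" "x \<in> S"
  shows "(deriv ^^ m) (Lag_op \<gamma> f) x = x * (deriv ^^ (m+2)) f x + (\<gamma> + 1 + m - x) * (deriv ^^ (m+1)) f x - m * (deriv ^^ m) f x"
  using assms(2,3)
proof (induction m arbitrary: x)
  case 0 then show ?case by (simp add: Lag_op_def numeral_2_eq_2)
next
  case (Suc m)
  have C: "Ck_on (m+2) S f" using Suc.prems(1) by (auto intro: Ck_mono_le)
  have "(deriv ^^ Suc m) (Lag_op \<gamma> f) x = deriv ((deriv ^^ m) (Lag_op \<gamma> f)) x" by simp
  also have "\<dots> = deriv (\<lambda>z. z * (deriv ^^ (m+2)) f z + (\<gamma> + 1 + m - z) * (deriv ^^ (m+1)) f z - m * (deriv ^^ m) f z) x"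
    by (rule deriv_cong_ev[OF ev_open[OF assms(1) Suc.prems(2)] refl]) (rule Suc.IH[OF C])
  also have "\<dots> = x * (deriv ^^ (Suc m+2)) f x + (\<gamma> + 1 + Suc m - x) * (deriv ^^ (Suc m+1)) f x - Suc m * (deriv ^^ Suc m) f x"
  proof (rule DERIV_imp_deriv)
    have d: "((deriv ^^ k) f has_real_derivative (deriv ^^ Suc k) f x) (at x)" if "k \<le> m+2" for k
      using Ck_der[OF Suc.prems(1) _ Suc.prems(2), of k] that by simp
    show "((\<lambda>z. z * (deriv ^^ (m+2)) f z + (\<gamma> + 1 + m - z) * (deriv ^^ (m+1)) f z - m * (deriv ^^ m) f z) has_real_derivative
       x * (deriv ^^ (Suc m+2)) f x + (\<gamma> + 1 + Suc m - x) * (deriv ^^ (Suc m+1)) f x - Suc m * (deriv ^^ Suc m) f x) (at x)"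
      apply (rule derivative_eq_intros d[of "m+2"] d[of "m+1"] d[of m] | simp)+
      apply (simp add: algebra_simps)
      done
  qed
  finally show ?case .
qed

lemma DLIN:
  assumes "open S" "Ck_on m S g" "Ck_on m S h" "x \<in> S"
  shows "(deriv ^^ m) (\<lambda>z. g z - c * h z) x = (deriv ^^ m) g x - c * (deriv ^^ m) h x"
  using assms(2-4)
proof (induction m arbitrary: x)
  case 0 then show ?case by simp
next
  case (Suc m)
  have "(deriv ^^ Suc m) (\<lambda>z. g z - c * h z) x = deriv ((deriv ^^ m) (\<lambda>z. g z - c * h z)) x" by simp
  also have "\<dots> = deriv (\<lambda>z. (deriv ^^ m) g z - c * (deriv ^^ m) h z) x"
    by (rule deriv_cong_ev[OF ev_open[OF assms(1) Suc.prems(3)] refl]) (rule Suc.IH; use Suc.prems Ck_mono in auto)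
  also have "\<dots> = (deriv ^^ Suc m) g x - c * (deriv ^^ Suc m) h x"
    by (rule DERIV_imp_deriv) (auto intro!: derivative_eq_intros Ck_der[OF Suc.prems(1)] Ck_der[OF Suc.prems(2)] Suc.prems(3))
  finally show ?case .
qed

lemma DRf:
  assumes "open S" "Ck_on (m+2) S f" "x \<in> S"
  shows "(deriv ^^ m) (Rf \<gamma> j f) x = x * (deriv ^^ (m+2)) f x + (\<gamma> + 1 + m - x) * (deriv ^^ (m+1)) f x - m * (deriv ^^ m) f x - j * (deriv ^^ m) f x"
proof -
  have "(deriv ^^ m) (Rf \<gamma> j f) x = (deriv ^^ m) (Lag_op \<gamma> f) x - j * (deriv ^^ m) f x"
    unfolding Rf_def by (rule DLIN[OF assms(1) Ck_Lag[OF assms(1,2)] _ assms(3)]) (use assms(2) in \<open>auto intro: Ck_mono_le\<close>)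
  then show ?thesis using DL[OF assms] by simp
qed

lemma Rf_derivs:
  assumes "open S" "Ck_on 4 S f" "x \<in> S"
  shows "Rf \<gamma> j f x = x * (deriv ^^ 2) f x + (\<gamma> + 1 - x) * (deriv ^^ 1) f x - j * (deriv ^^ 0) f x"
    "deriv (Rf \<gamma> j f) x = x * (deriv ^^ 3) f x + (\<gamma> + 2 - x) * (deriv ^^ 2) f x - (deriv ^^ 1) f x - j * (deriv ^^ 1) f x"
    "deriv (deriv (Rf \<gamma> j f)) x = x * (deriv ^^ 4) f x + (\<gamma> + 3 - x) * (deriv ^^ 3) f x - 2 * (deriv ^^ 2) f x - j * (deriv ^^ 2) f x"
proof -
  have C: "Ck_on (m+2) S f" if "m \<le> 2" for m using assms(2) that by (auto intro: Ck_mono_le)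
  show "Rf \<gamma> j f x = x * (deriv ^^ 2) f x + (\<gamma> + 1 - x) * (deriv ^^ 1) f x - j * (deriv ^^ 0) f x"
    using DRf[OF assms(1) C[of 0] assms(3), of \<gamma> j] by (simp add: numeral_2_eq_2)
  show "deriv (Rf \<gamma> j f) x = x * (deriv ^^ 3) f x + (\<gamma> + 2 - x) * (deriv ^^ 2) f x - (deriv ^^ 1) f x - j * (deriv ^^ 1) f x"
    using DRf[OF assms(1) C[of 1] assms(3), of \<gamma> j] by (simp add: numeral_3_eq_3 numeral_2_eq_2 algebra_simps)
  show "deriv (deriv (Rf \<gamma> j f)) x = x * (deriv ^^ 4) f x + (\<gamma> + 3 - x) * (deriv ^^ 3) f x - 2 * (deriv ^^ 2) f x - j * (deriv ^^ 2) f x"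
    using DRf[OF assms(1) C[of 2] assms(3), of \<gamma> j] by (simp add: numeral_3_eq_3 numeral_2_eq_2 eval_nat_numeral algebra_simps)
qed

lemma Rf_unf: "Rf \<beta> j g x = x * deriv (deriv g) x + (\<beta> + 1 - x) * deriv g x - real j * g x"
  by (simp add: Rf_def Lag_op_def)

lemma star_id:
  assumes "open S" "Ck_on 4 S f" "x \<in> S"
  shows "Rf (\<beta>+1) (a+1) (Rf (\<beta>+k) a f) x = Rf (\<beta>+k+1) (a+1) (Rf \<beta> a f) x"
  unfolding Rf_unf[of "\<beta>+1" "a+1" "Rf (\<beta>+k) a f"] Rf_unf[of "\<beta>+k+1" "a+1" "Rf \<beta> a f"]
  unfolding Rf_derivs[OF assms]
  by (simp add: algebra_simps)

lemma starstar:
  assumes "open S" "Ck_on 4 S f" "x \<in> S" "x \<noteq> 0"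
  shows "Lag_op (-1) (Rf \<gamma> c f) x = Lag_op \<gamma> (Lag_op (-1) f) x - ((\<gamma>+1)/x) * Lag_op (-1) f x - real c * Lag_op (-1) f x"
  unfolding Lag_Rf0
  unfolding Rf_unf[of "-1" 0 "Rf \<gamma> c f"] Rf_unf[of "\<gamma>" 0 "Rf (-1) 0 f"]
  unfolding Rf_derivs[OF assms(1-3)]
  using assms(4) by (simp add: field_simps)

lemma S_lemma:
  assumes "open S" "Ck_on (2*k+4) S f" "x \<in> S"
  shows "fold (Rf (\<beta>+1)) [1..<k+2] f x = Rf (\<beta>+real k+1) (k+1) (fold (Rf \<beta>) [1..<k+1] f) x"
  using assms(2,3)
proof (induction k arbitrary: x)
  case 0 then show ?case by simp
next
  case (Suc k)
  define g where "g = fold (Rf \<beta>) [1..<k+1] f"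
  have Cg: "Ck_on 4 S g" unfolding g_def
    by (rule Ck_fold[OF assms(1)]) (use Suc.prems(1) in \<open>auto intro: Ck_mono_le\<close>)
  have C: "Ck_on (2*k+4) S f" using Suc.prems(1) by (auto intro: Ck_mono_le)
  have "fold (Rf (\<beta>+1)) [1..<Suc k+2] f x = Rf (\<beta>+1) (k+2) (fold (Rf (\<beta>+1)) [1..<k+2] f) x"
    by simp
  also have "\<dots> = Rf (\<beta>+1) (k+2) (Rf (\<beta>+real k+1) (k+1) g) x"
    by (rule Rf_loc[OF assms(1) Suc.prems(2)]) (use Suc.IH[OF C] g_def in auto)
  also have "\<dots> = Rf (\<beta>+(real k+1)+1) ((k+1)+1) (Rf \<beta> (k+1) g) x"
    using star_id[OF assms(1) Cg Suc.prems(2), of \<beta> "k+1" "real k + 1"]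
    by (simp add: algebra_simps)
  also have "\<dots> = Rf (\<beta>+real (Suc k)+1) (Suc k+1) (fold (Rf \<beta>) [1..<Suc k+1] f) x"
    by (simp add: g_def algebra_simps)
  finally show ?case .
qed

lemma lhs_loc: "open S \<Longrightarrow> x \<in> S \<Longrightarrow> (\<And>z. z \<in> S \<Longrightarrow> f z = g z) \<Longrightarrow> lhs_factor j f x = lhs_factor j g x"
  using Lag_loc[of S x f g] by (simp add: lhs_factor_def)

lemma MainI:
  assumes "Ck_on (2*m+2) {0<..} y" "x > 0"
  shows "fold lhs_factor [0..<m+1] y x = Lag_op (-1) (fold (Rf (real m)) [1..<m+1] y) x"
  using assms
proof (induction m arbitrary: x)
  case 0 then show ?case by (simp add: lhs_factor_def)
next
  case (Suc m)
  define g where "g = fold (Rf (real m)) [1..<m+1] y"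
  have op: "open {0::real<..}" by simp
  have x: "x \<in> {0<..}" using Suc.prems by simp
  have Cg: "Ck_on 4 {0<..} g" unfolding g_def
    by (rule Ck_fold[OF op]) (use Suc.prems(1) in \<open>auto intro: Ck_mono_le\<close>)
  have C: "Ck_on (2*m+2) {0<..} y" using Suc.prems(1) by (auto intro: Ck_mono_le)
  have "fold lhs_factor [0..<Suc m+1] y x = lhs_factor (Suc m) (fold lhs_factor [0..<m+1] y) x"
    by simp
  also have "\<dots> = lhs_factor (Suc m) (Lag_op (-1) g) x"
    by (rule lhs_loc[OF op x]) (use Suc.IH[OF C] g_def in auto)
  also have "\<dots> = Lag_op (-1) (Rf (2 * real (Suc m) - 1) (Suc m) g) x"
    using starstar[OF op Cg x, of "2 * real (Suc m) - 1" "Suc m"] Suc.prems(2)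
    by (simp add: lhs_factor_def)
  also have "\<dots> = Lag_op (-1) (fold (Rf (real (Suc m))) [1..<Suc m+1] y) x"
  proof (rule Lag_loc[OF op x])
    fix z :: real assume z: "z \<in> {0<..}"
    have eq: "2*m+4 = 2*Suc m+2" by simp
    have Cy: "Ck_on (2*m+4) {0<..} y" using Suc.prems(1) by (simp only: eq)
    have "fold (Rf (real m + 1)) [1..<m+2] y z = Rf (real m+real m+1) (m+1) g z"
      using S_lemma[OF op Cy z, of "real m"] g_def by simp
    then show "Rf (2 * real (Suc m) - 1) (Suc m) g z = fold (Rf (real (Suc m))) [1..<Suc m+1] y z"
      by (simp add: algebra_simps del: upt_Suc)
  qed
  finally show ?case .
qed

lemma part1:
  assumes "Ck_on (2 * \<alpha> + 4) {0<..} y" "x > 0"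
  shows "(-1) ^ (\<alpha> + 1) * op_prod lhs_factor 0 (\<alpha> + 1) y x = calL \<alpha> y x"
proof -
  have r: "rhs_factor \<alpha> = Rf (real (\<alpha>+1))"
    by (auto simp: fun_eq_iff rhs_factor_def Rf_def add.commute)
  have "fold lhs_factor [0..<(\<alpha>+1)+1] y x = Lag_op (-1) (fold (Rf (real (\<alpha>+1))) [1..<(\<alpha>+1)+1] y) x"
  proof (rule MainI)
    have eq: "2*(\<alpha>+1)+2 = 2*\<alpha>+4" by simp
    show "Ck_on (2*(\<alpha>+1)+2) {0<..} y" using assms(1) by (simp only: eq)
  qed (use assms in simp)
  then show ?thesis unfolding calL_def op_prod_def r by simp
qed


definition LP :: "real \<Rightarrow> nat \<Rightarrow> real poly \<Rightarrow> real poly" where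
  "LP \<beta> j q = pCons 0 (pderiv (pderiv q)) + smult (\<beta>+1) (pderiv q) - pCons 0 (pderiv q) - smult (real j) q"

definition Ep :: "real poly \<Rightarrow> real poly" where
  "Ep q = pderiv (pderiv q) - pderiv q"

lemma deriv_poly: "deriv (poly q) = poly (pderiv q)"
  by (rule ext, rule DERIV_imp_deriv, rule poly_DERIV)

lemma Rf_poly: "Rf \<beta> j (poly q) = poly (LP \<beta> j q)"
  by (rule ext) (simp add: Rf_def Lag_op_def deriv_poly LP_def algebra_simps)

lemma fold_poly: "fold (Rf \<beta>) js (poly q) = poly (fold (LP \<beta>) js q)"
proof (induction js arbitrary: q)
  case Nil then show ?case by simp
next
  case (Cons j js)
  have "fold (Rf \<beta>) (j#js) (poly q) = fold (Rf \<beta>) js (Rf \<beta> j (poly q))" by simp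
  also have "\<dots> = fold (Rf \<beta>) js (poly (LP \<beta> j q))" by (simp only: Rf_poly)
  also have "\<dots> = poly (fold (LP \<beta>) js (LP \<beta> j q))" by (rule Cons.IH)
  finally show ?case by simp
qed

lemma Lag_poly: "Lag_op (-1) (poly h) x = x * poly (Ep h) x"
  by (simp add: Lag_op_def deriv_poly Ep_def algebra_simps)

lemmas pev = pderiv_add pderiv_diff pderiv_smult pderiv_pCons pderiv_minus
  poly_add poly_diff poly_smult poly_pCons poly_minus

lemma peq:
  fixes p q :: "real poly"
  assumes "\<And>x. poly p x = poly q x" shows "p = q"
proof -
  have "poly p = poly q" by (rule ext) (rule assms)
  then show ?thesis by (simp only: poly_eq_poly_eq_iff)
qed

lemma Ep_LP: "Ep (LP \<beta> j q) = LP (\<beta>+2) (Suc j) (Ep q)"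
  apply (rule peq)
  apply (simp only: Ep_def LP_def pev)
  apply (simp add: algebra_simps)
  done

lemma Ep_fold: "Ep (fold (LP \<beta>) js q) = fold (LP (\<beta>+2)) (map Suc js) (Ep q)"
  by (induction js arbitrary: q) (simp_all add: Ep_LP)

lemma LP_lin: "LP \<beta> j (smult a p + smult b q) = smult a (LP \<beta> j p) + smult b (LP \<beta> j q)"
  apply (rule peq)
  apply (simp only: LP_def pev)
  apply (simp add: algebra_simps)
  done

lemma LP_j: "LP \<beta> j q = LP \<beta> 0 q - smult (real j) q"
  by (simp add: LP_def)

lemma LP_shift: "LP (\<beta>+1) 0 q = LP \<beta> 0 q + pderiv q"
  apply (rule peq)
  apply (simp only: LP_def pev)
  apply (simp add: algebra_simps)
  done

lemma pderiv_LP: "pderiv (LP \<beta> 0 q) = LP (\<beta>+1) 0 (pderiv q) - pderiv q"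
  apply (rule peq)
  apply (simp only: LP_def pev)
  apply (simp add: algebra_simps)
  done

lemma prod_poch: "prod_list (map (\<lambda>j. c - real j) [2..<k+2]) = (-1)^k * pochhammer (2 - c) k"
proof (induction k)
  case 0 then show ?case by simp
next
  case (Suc k)
  have "[2..<Suc k+2] = [2..<k+2] @ [k+2]" by simp
  then show ?case using Suc by (simp add: pochhammer_Suc algebra_simps)
qed



definition cc :: "real \<Rightarrow> nat \<Rightarrow> nat \<Rightarrow> real" where
  "cc \<gamma> N k = pochhammer (- real N) k / (pochhammer (\<gamma>+1) k * fact k)"

definition Pq :: "real \<Rightarrow> nat \<Rightarrow> real poly" where
  "Pq \<gamma> N = (\<Sum>k\<le>N. monom ((cc \<gamma> N) k) k)"

lemma poly_Pq: "poly (Pq \<gamma> N) x = hyp1F1_term N (\<gamma>+1) x"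
  by (simp add: Pq_def poly_sum poly_monom hyp1F1_term_def cc_def)

lemma cc_zero: "k > N \<Longrightarrow> (cc \<gamma> N) k = 0"
  by (simp add: cc_def pochhammer_of_nat_eq_0_lemma)

lemma coeff_Pq: "coeff (Pq \<gamma> N) k = (cc \<gamma> N) k"
  by (simp add: Pq_def coeff_sum cc_zero)

lemma cc_rel:
  assumes gpos: "\<gamma> > 0"
  shows "real (Suc k) * (\<gamma> + 1 + real k) * (cc \<gamma> N) (Suc k) = (real k - real N) * (cc \<gamma> N) k"
proof -
  have p: "pochhammer (\<gamma>+1) k > 0" using gpos by (intro pochhammer_pos) simp
  have q: "\<gamma> + 1 + real k > 0" using gpos by simp
  have f: "fact k > (0::real)" by simp
  have "(cc \<gamma> N) (Suc k) = (cc \<gamma> N) k * ((- real N + real k) / ((\<gamma> + 1 + real k) * real (Suc k)))"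
    unfolding cc_def pochhammer_Suc fact_Suc using p q f by (simp add: field_simps)
  moreover obtain d where d: "d = (\<gamma> + 1 + real k) * real (Suc k)" by blast
  moreover have "d \<noteq> 0" using d q by simp
  ultimately have "(cc \<gamma> N) (Suc k) = (cc \<gamma> N) k * ((- real N + real k) / d)" "d \<noteq> 0" by simp_all
  then have "d * (cc \<gamma> N) (Suc k) = (real k - real N) * (cc \<gamma> N) k" by simp
  then show ?thesis using d by (simp add: algebra_simps)
qed

lemma ODE:
  assumes gpos: "\<gamma> > 0"
  shows "LP \<gamma> 0 (Pq \<gamma> N) = smult (- real N) (Pq \<gamma> N)"
proof (rule poly_eqI)
  fix k
  show "coeff (LP \<gamma> 0 (Pq \<gamma> N)) k = coeff (smult (- real N) (Pq \<gamma> N)) k"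
  proof (cases k)
    case 0
    then show ?thesis using cc_rel[OF gpos, of 0] by (simp add: LP_def coeff_pderiv coeff_Pq algebra_simps)
  next
    case (Suc k')
    then show ?thesis using cc_rel[OF gpos, of "Suc k'"]
      by (simp add: LP_def coeff_pderiv coeff_Pq algebra_simps)
  qed
qed

lemma ODE1:
  assumes gpos: "\<gamma> > 0"
  shows "LP (\<gamma>+1) 0 (pderiv (Pq \<gamma> N)) = smult (1 - real N) (pderiv (Pq \<gamma> N))"
proof -
  have "pderiv (LP \<gamma> 0 (Pq \<gamma> N)) = smult (- real N) (pderiv (Pq \<gamma> N))" by (simp add: ODE[OF gpos] pderiv_smult pderiv_minus)
  then have h: "LP (\<gamma>+1) 0 (pderiv (Pq \<gamma> N)) - pderiv (Pq \<gamma> N) = smult (- real N) (pderiv (Pq \<gamma> N))" unfolding pderiv_LP .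
  show ?thesis
  proof (rule peq)
    fix x
    have e: "poly (LP (\<gamma>+1) 0 (pderiv (Pq \<gamma> N))) x - poly (pderiv (Pq \<gamma> N)) x = - real N * poly (pderiv (Pq \<gamma> N)) x"
      using arg_cong[OF h, of "\<lambda>p. poly p x"] by simp
    show "poly (LP (\<gamma>+1) 0 (pderiv (Pq \<gamma> N))) x = poly (smult (1 - real N) (pderiv (Pq \<gamma> N))) x"
      using e by (simp add: algebra_simps)
  qed
qed

lemma two_dim:
  assumes gpos: "\<gamma> > 0"
  shows "LP (\<gamma>+1) j (smult a (Pq \<gamma> N) + smult b (pderiv (Pq \<gamma> N))) =
   smult (a * (- real N - real j)) (Pq \<gamma> N) + smult (a + b * (1 - real N - real j)) (pderiv (Pq \<gamma> N))"
  unfolding LP_lin LP_j[of "\<gamma>+1" j] ODE1[OF gpos]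
  unfolding LP_shift ODE[OF gpos]
  apply (rule peq)
  apply (simp only: pev)
  apply (simp add: algebra_simps)
  done

lemma two_dim_fold:
  assumes gpos: "\<gamma> > 0"
  shows "fold (LP (\<gamma>+1)) js (smult a (Pq \<gamma> N) + smult b (pderiv (Pq \<gamma> N))) =
   smult (a * prod_list (map (\<lambda>j. - real N - real j) js)) (Pq \<gamma> N)
   + smult (a * (prod_list (map (\<lambda>j. 1 - real N - real j) js) - prod_list (map (\<lambda>j. - real N - real j) js))
            + b * prod_list (map (\<lambda>j. 1 - real N - real j) js)) (pderiv (Pq \<gamma> N))"
proof (induction js arbitrary: a b)
  case Nil then show ?case by simp
next
  case (Cons j js)
  have "fold (LP (\<gamma>+1)) (j#js) (smult a (Pq \<gamma> N) + smult b (pderiv (Pq \<gamma> N))) =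
    fold (LP (\<gamma>+1)) js (smult (a * (- real N - real j)) (Pq \<gamma> N) + smult (a + b * (1 - real N - real j)) (pderiv (Pq \<gamma> N)))"
    by (simp only: fold_Cons o_apply two_dim[OF gpos])
  then show ?case unfolding Cons.IH
    apply -
    apply (rule peq)
    apply (simp only: pev)
    apply (simp add: algebra_simps)
    done
qed

lemma Ep_x:
  assumes gpos: "\<gamma> > 0"
  shows "Ep (pCons 0 (Pq \<gamma> N)) = smult (- (real N + 1)) (Pq \<gamma> N) + smult (1 - \<gamma>) (pderiv (Pq \<gamma> N))"
proof (rule peq)
  fix x
  have "poly (LP \<gamma> 0 (Pq \<gamma> N)) x = poly (smult (- real N) (Pq \<gamma> N)) x" by (simp only: ODE[OF gpos])
  then have e: "x * poly (pderiv (pderiv (Pq \<gamma> N))) x + (\<gamma> + 1) * poly (pderiv (Pq \<gamma> N)) x - x * poly (pderiv (Pq \<gamma> N)) x = - real N * poly (Pq \<gamma> N) x"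
    by (simp add: LP_def pev)
  show "poly (Ep (pCons 0 (Pq \<gamma> N))) x = poly (smult (- (real N + 1)) (Pq \<gamma> N) + smult (1 - \<gamma>) (pderiv (Pq \<gamma> N))) x"
    by (simp only: Ep_def pev) (use e in \<open>simp add: algebra_simps\<close>)
qed

lemma Ep_smult: "Ep (smult c p) = smult c (Ep p)"
  by (simp add: Ep_def pderiv_smult smult_diff_right)

lemma sq1: "(-1::real)^k * (-1)^k = 1"
  by (simp flip: power_add)

lemma lag_inst: "real (\<alpha>::nat) + 2 > 0"
  by simp

lemma ET_lemma:
  assumes n: "n \<ge> 1"
  shows "Ep (smult (- t * K) (pCons 0 (Pq (real \<alpha> + 2) (n - 1)))) =
    smult (t * K * real n) (Pq (real \<alpha> + 2) (n - 1)) + smult (t * K * (real \<alpha> + 1)) (pderiv (Pq (real \<alpha> + 2) (n - 1)))"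
proof -
  have g: "real \<alpha> + 2 > 0" by simp
  have rn: "real (n - 1) = real n - 1" using n by (simp add: of_nat_diff)
  have "Ep (smult (- t * K) (pCons 0 (Pq (real \<alpha> + 2) (n - 1)))) =
    smult (- t * K) (smult (- (real (n-1) + 1)) (Pq (real \<alpha> + 2) (n - 1)) + smult (1 - (real \<alpha> + 2)) (pderiv (Pq (real \<alpha> + 2) (n - 1))))"
    by (simp only: Ep_smult Ep_x[OF g])
  also have "\<dots> = smult (t * K * real n) (Pq (real \<alpha> + 2) (n - 1)) + smult (t * K * (real \<alpha> + 1)) (pderiv (Pq (real \<alpha> + 2) (n - 1)))"
    unfolding rn by (rule peq, simp only: pev) (simp add: algebra_simps)
  finally show ?thesis .
qed

lemma part2:
  assumes n: "n \<ge> 1" and x: "x > 0"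
  shows "calL \<alpha> (T_fun \<alpha> n) x + pochhammer (real n) (\<alpha> + 2) * T_fun \<alpha> n x = 0"
proof -
  have Lg: "real \<alpha> + 2 > 0" by (rule lag_inst)
  define N where "N = n - 1"
  have rN: "real N = real n - 1" using n N_def by simp
  define K where "K = pochhammer (real \<alpha> + 2 + 1) N / fact N"
  define t where "t = t_coef \<alpha> n"
  define Tq where "Tq = smult (- t * K) (pCons 0 (Pq (real \<alpha> + 2) (n - 1)))"
  have T: "T_fun \<alpha> n = poly Tq"
    apply (rule ext)
    apply (simp only: T_fun_def laguerre_def Tq_def poly_smult poly_pCons poly_Pq)
    apply (simp add: K_def t_def N_def)
    done
  have r: "rhs_factor \<alpha> = Rf (real \<alpha> + 1)"
    by (auto simp: fun_eq_iff rhs_factor_def Rf_def)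
  define a where "a = t * K * real n"
  define b where "b = t * K * (real \<alpha> + 1)"
  have ET: "Ep Tq = smult a (Pq (real \<alpha> + 2) (n - 1)) + smult b (pderiv (Pq (real \<alpha> + 2) (n - 1)))"
    unfolding Tq_def a_def b_def by (rule ET_lemma[OF n])
  define F1 where "F1 = prod_list (map (\<lambda>j. - real (n-1) - real j) [2..<\<alpha>+1+2])"
  define F2 where "F2 = prod_list (map (\<lambda>j. 1 - real (n-1) - real j) [2..<\<alpha>+1+2])"
  have F1: "F1 = (-1)^(\<alpha>+1) * pochhammer (real n + 1) (\<alpha>+1)"
    unfolding F1_def prod_poch using n by (simp add: algebra_simps)
  have F2: "F2 = (-1)^(\<alpha>+1) * pochhammer (real n) (\<alpha>+1)"
    unfolding F2_def prod_poch using n by (simp add: algebra_simps)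
  have R1: "pochhammer (real n) (\<alpha>+2) = real n * pochhammer (real n + 1) (\<alpha>+1)"
    using pochhammer_rec[of "real n" "\<alpha>+1"] by simp
  have R2: "pochhammer (real n) (\<alpha>+2) = (real n + real (\<alpha>+1)) * pochhammer (real n) (\<alpha>+1)"
    using pochhammer_rec'[of "real n" "\<alpha>+1"] by simp
  have upt: "map Suc [1..<Suc (\<alpha>+1)] = [2..<\<alpha>+1+2]"
  proof -
    have "Suc 1 = (2::nat)" "Suc (Suc (\<alpha>+1)) = \<alpha>+1+2" by simp_all
    then show ?thesis by (simp only: map_Suc_upt)
  qed
  have "calL \<alpha> (poly Tq) x = (-1)^(\<alpha>+1) * (x * poly (fold (LP (real \<alpha> + 2 + 1)) [2..<\<alpha>+1+2] (Ep Tq)) x)"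
  proof -
    have e: "real \<alpha> + 1 + 2 = real \<alpha> + 2 + 1" by simp
    show ?thesis
      by (simp only: calL_def op_prod_def r fold_poly Lag_poly Ep_fold upt e)
  qed
  also have "\<dots> = (-1)^(\<alpha>+1) * (x * (a * F1 * poly (Pq (real \<alpha> + 2) (n - 1)) x + (a * (F2 - F1) + b * F2) * poly (pderiv (Pq (real \<alpha> + 2) (n - 1))) x))"
    unfolding ET two_dim_fold[OF Lg] F1_def F2_def by simp
  finally have C: "calL \<alpha> (poly Tq) x = (-1)^(\<alpha>+1) * (x * (a * F1 * poly (Pq (real \<alpha> + 2) (n - 1)) x + (a * (F2 - F1) + b * F2) * poly (pderiv (Pq (real \<alpha> + 2) (n - 1))) x))" .
  have Z: "a * (F2 - F1) + b * F2 = 0"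
    unfolding a_def b_def F1 F2 using R1 R2 by (simp add: algebra_simps)
  have "calL \<alpha> (poly Tq) x = ((-1)^(\<alpha>+1) * (-1)^(\<alpha>+1)) * (x * a * pochhammer (real n + 1) (\<alpha>+1) * poly (Pq (real \<alpha> + 2) (n - 1)) x)"
  proof -
    have C2: "calL \<alpha> (poly Tq) x = (-1)^(\<alpha>+1) * (x * (a * F1 * poly (Pq (real \<alpha> + 2) (n - 1)) x))"
      using C unfolding Z by simp
    show ?thesis unfolding C2 F1 by (simp add: algebra_simps)
  qed
  then have "calL \<alpha> (poly Tq) x = x * t * K * pochhammer (real n) (\<alpha>+2) * poly (Pq (real \<alpha> + 2) (n - 1)) x"
    unfolding sq1 a_def R1 by (simp add: algebra_simps)
  then show ?thesis unfolding T by (simp add: Tq_def algebra_simps)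
qed


theorem corollary3p3:
  fixes \<alpha> :: nat
  shows "(\<forall>y x. Ck_on (2 * \<alpha> + 4) {0<..} y \<and> x > 0 \<longrightarrow>
            (-1) ^ (\<alpha> + 1) * op_prod lhs_factor 0 (\<alpha> + 1) y x = calL \<alpha> y x)
       \<and> (\<forall>n::nat. n \<ge> 1 \<longrightarrow> (\<forall>x::real. x > 0 \<longrightarrow>
            calL \<alpha> (T_fun \<alpha> n) x + pochhammer (real n) (\<alpha> + 2) * T_fun \<alpha> n x = 0))"
  using part1 part2 by blast

thm_deps corollary3p3

end
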